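(* Let $n\ge 5$, $k\in\{2,\dots,n-3\}$, $\gamma>0$, and let $0<x_1\le x_2\le\dots\le x_{n-1}$ be real numbers. Assume that $$x_I+x_{I^*}=2\gamma$$ for all $I\subset\{1,\dots,n-1\}$ with $|I|=k$, where $I^*:=\{n-i: i\in I\}$. Then $x_1=\dots=x_{n-1}$.
   Context: For $I\subset\{1,\dots,n-1\}$, $x_I:=\prod_{\iota\in I}x_\iota$ and $|I|$ is the cardinality of $I$. *)

theory Defs
  imports Complex_Main
begin

end

theory Submission
  imports Defs
begin

theorem lemma5p1:
  fixes n k :: nat and \<gamma> :: real and x :: "nat \<Rightarrow> real"
  assumes "n \<ge> 5"
    and "2 \<le> k" and "k \<le> n - 3"
    and "\<gamma> > 0"
    and "0 < x 1"
    and "\<And>i j. 1 \<le> i \<Longrightarrow> i \<le> j \<Longrightarrow> j \<le> n - 1 \<Longrightarrow> x i \<le> x j"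
    and "\<And>I. I \<subseteq> {1..n-1} \<Longrightarrow> card I = k \<Longrightarrow>
           (\<Prod>i\<in>I. x i) + (\<Prod>i\<in>(\<lambda>i. n - i) ` I. x i) = 2 * \<gamma>"
  shows "\<forall>i\<in>{1..n-1}. x i = x 1"
proof -
  note n5 = assms(1) and k2 = assms(2) and kn = assms(3) and x1 = assms(5)
  note mono = assms(6)
  have pos: "x i > 0" if "i \<in> {1..n-1}" for i
    using mono[of 1 i] that x1 by auto
  have eq: "(\<Prod>i\<in>I. x i) + (\<Prod>i\<in>I. x (n - i)) = 2 * \<gamma>"
    if "I \<subseteq> {1..n-1}" "card I = k" for I
  proof -
    have "inj_on (\<lambda>i. n - i) I"
    proof (rule inj_onI)
      fix a b assume "a \<in> I" "b \<in> I" "n - a = n - b"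
      moreover have "a \<le> n - 1" "b \<le> n - 1" using that(1) calculation by auto
      ultimately show "a = b" by linarith
    qed
    then have "(\<Prod>i\<in>(\<lambda>i. n - i) ` I. x i) = (\<Prod>i\<in>I. x (n - i))"
      by (simp add: prod.reindex)
    with assms(7)[OF that] show ?thesis by simp
  qed
  define S where "S = {2..n-2}"
  have cardS: "card S = n - 3" unfolding S_def using n5 by simp
  have finS: "finite S" unfolding S_def by simp
  have S1: "S \<subseteq> {1..n-1}" unfolding S_def by auto
  have Sref: "n - i \<in> S" if "i \<in> S" for i using that n5 unfolding S_def by auto
  have posP: "(\<Prod>i\<in>J. x i) > 0" if "J \<subseteq> {1..n-1}" for J
    using that pos by (intro prod_pos) auto
  have posQ: "(\<Prod>i\<in>J. x (n - i)) > 0" if "J \<subseteq> {1..n-1}" for J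
  proof (intro prod_pos)
    fix a assume "a \<in> J"
    then have "1 \<le> a" "a \<le> n - 1" using that by auto
    then have "n - a \<in> {1..n-1}" by auto
    then show "0 < x (n - a)" using pos by blast
  qed
  have key: "x 1 = x (n-1)"
  proof (cases "x 1 = x (n-1)")
    case True then show ?thesis .
  next
    case False
    have PQ: "(\<Prod>i\<in>J. x i) = (\<Prod>i\<in>J. x (n - i))"
      if J: "J \<subseteq> S" "card J = k - 1" for J
    proof -
      have fJ: "finite J" using J finS finite_subset by blast
      have n1: "1 \<notin> J" "n - 1 \<notin> J" using J(1) n5 unfolding S_def by (auto, force)
      have c1: "card (insert 1 J) = k" using fJ n1 J k2 by simp
      have c2: "card (insert (n-1) J) = k" using fJ n1 J k2 by simp
      have s1: "insert 1 J \<subseteq> {1..n-1}" "insert (n-1) J \<subseteq> {1..n-1}"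
        using J S1 n5 by auto
      note e1 = eq[OF s1(1) c1]
      note e2 = eq[OF s1(2) c2]
      have nn: "n - (n - 1) = 1" using n5 by simp
      have "x 1 * (\<Prod>i\<in>J. x i) + x (n-1) * (\<Prod>i\<in>J. x (n - i))
          = x (n-1) * (\<Prod>i\<in>J. x i) + x 1 * (\<Prod>i\<in>J. x (n - i))"
        using e1 e2 fJ n1 nn by simp
      then have "(x 1 - x (n-1)) * ((\<Prod>i\<in>J. x i) - (\<Prod>i\<in>J. x (n - i))) = 0"
        by (simp add: algebra_simps)
      with False show ?thesis by simp
    qed
    have allt: "x c = x 2" if "c \<in> S" for c
    proof -
      have ceq: "x c = x c'" if cc: "c \<in> S" "c' \<in> S" "c < c'" for c c'
      proof -
        have "k - 2 \<le> card (S - {c, c'})"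
          using cc cardS finS kn by (simp add: card_Diff_subset)
        then obtain J where J: "J \<subseteq> S - {c, c'}" "card J = k - 2" "finite J"
          by (meson obtain_subset_with_card_n)
        have JS: "J \<subseteq> S" using J by auto
        have c1: "card (insert c J) = k - 1" "card (insert c' J) = k - 1"
        proof -
          have "c \<notin> J" "c' \<notin> J" using J(1) by auto
          then show "card (insert c J) = k - 1" "card (insert c' J) = k - 1"
            using J(2,3) k2 by auto
        qed
        have i1: "insert c J \<subseteq> S" "insert c' J \<subseteq> S" using J cc by auto
        note e1 = PQ[OF i1(1) c1(1)]
        note e2 = PQ[OF i1(2) c1(2)]
        have nc: "c \<notin> J" "c' \<notin> J" using J by auto
        have a: "x c * (\<Prod>i\<in>J. x i) = x (n - c) * (\<Prod>i\<in>J. x (n - i))"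
          using e1 J nc by simp
        have b: "x c' * (\<Prod>i\<in>J. x i) = x (n - c') * (\<Prod>i\<in>J. x (n - i))"
          using e2 J nc by simp
        have pP: "(\<Prod>i\<in>J. x i) > 0" using posP JS S1 by blast
        have pQ: "(\<Prod>i\<in>J. x (n - i)) > 0" using posQ JS S1 by blast
        have "(x c * x (n - c')) * ((\<Prod>i\<in>J. x i) * (\<Prod>i\<in>J. x (n - i)))
            = (x c' * x (n - c)) * ((\<Prod>i\<in>J. x i) * (\<Prod>i\<in>J. x (n - i)))"
          using a b by (metis mult.commute mult.left_commute)
        then have pr: "x c * x (n - c') = x c' * x (n - c)"
          using pP pQ by simp
        have m1: "x c \<le> x c'" using mono[of c c'] cc unfolding S_def by auto
        have m2: "x (n - c') \<le> x (n - c)" using mono[of "n-c'" "n-c"] cc n5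
          unfolding S_def by auto
        have p1: "x c > 0" "x (n - c') > 0" "x c' > 0"
          using pos cc S1 Sref[OF cc(2)] by auto
        show ?thesis
        proof (rule ccontr)
          assume "x c \<noteq> x c'"
          then have "x c < x c'" using m1 by simp
          then have "x c * x (n - c') < x c' * x (n - c')" using p1 by simp
          also have "\<dots> \<le> x c' * x (n - c)" using m2 p1 by simp
          finally show False using pr by simp
        qed
      qed
      have 2: "2 \<in> S" unfolding S_def using n5 by auto
      show ?thesis
        using ceq[OF 2 that] ceq[OF that 2] that by (cases "c = 2") (auto, linarith)
    qed
    define t where "t = x 2"
    have tpos: "t > 0" unfolding t_def using pos n5 by auto
    have PS: "(\<Prod>i\<in>J. x i) = t ^ card J" if "J \<subseteq> S" for J
    proof -
      have "(\<Prod>i\<in>J. x i) = (\<Prod>i\<in>J. t)"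
        using that allt unfolding t_def by (intro prod.cong) auto
      then show ?thesis by simp
    qed
    have QS: "(\<Prod>i\<in>J. x (n - i)) = t ^ card J" if "J \<subseteq> S" for J
    proof -
      have "(\<Prod>i\<in>J. x (n - i)) = (\<Prod>i\<in>J. t)"
        using that allt Sref unfolding t_def by (intro prod.cong) auto
      then show ?thesis by simp
    qed
    have nn: "n - (n - 1) = 1" using n5 by simp
    have n1: "1 \<notin> S" "n - 1 \<notin> S" "1 \<noteq> n - 1" using n5 unfolding S_def by auto
    obtain J0 where J0: "J0 \<subseteq> S" "card J0 = k" "finite J0"
      using kn cardS by (metis obtain_subset_with_card_n)
    have g0: "2 * t ^ k = 2 * \<gamma>" using eq[of J0] J0 S1 PS QS by auto
    obtain J1 where J1: "J1 \<subseteq> S" "card J1 = k - 1" "finite J1"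
      using kn cardS by (metis obtain_subset_with_card_n diff_le_self le_trans)
    have i1: "insert 1 J1 \<subseteq> {1..n-1}" using J1 S1 n5 by auto
    have nj1: "1 \<notin> J1" using J1(1) n1 by blast
    have c1: "card (insert 1 J1) = k"
      using nj1 J1(2,3) k2 by simp
    have "x 1 * t ^ (k - 1) + x (n - 1) * t ^ (k - 1) = 2 * \<gamma>"
    proof -
      have "(\<Prod>i\<in>insert 1 J1. x i) = x 1 * t ^ (k - 1)"
        using nj1 J1 PS[OF J1(1)] by simp
      moreover have "(\<Prod>i\<in>insert 1 J1. x (n - i)) = x (n - 1) * t ^ (k - 1)"
        using nj1 J1 QS[OF J1(1)] by simp
      ultimately show ?thesis using eq[OF i1 c1] by simp
    qed
    moreover have "t ^ k = t * t ^ (k - 1)" proof -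
      have "k = Suc (k - 1)" using k2 by simp
      then show ?thesis by (metis power_Suc)
    qed
    ultimately have g1: "(x 1 + x (n - 1)) * t ^ (k - 1) = (2 * t) * t ^ (k - 1)"
      using g0 by (simp add: algebra_simps)
    have tk1: "t ^ (k - 1) > 0" using tpos by simp
    have s1: "x 1 + x (n - 1) = 2 * t" using g1 tk1 mult_right_cancel[of "t ^ (k - 1)"] by (metis less_irrefl)
    obtain J2 where J2: "J2 \<subseteq> S" "card J2 = k - 2" "finite J2"
      using kn cardS by (metis obtain_subset_with_card_n diff_le_self le_trans)
    have i2: "insert 1 (insert (n-1) J2) \<subseteq> {1..n-1}" using J2 S1 n5 by auto
    have nj2: "1 \<notin> J2" "n - 1 \<notin> J2" using J2(1) n1 by blast+
    have c2: "card (insert 1 (insert (n-1) J2)) = k"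
      using nj2 J2(2,3) k2 n1(3) by simp
    have "x 1 * (x (n - 1) * t ^ (k - 2)) + x (n - 1) * (x 1 * t ^ (k - 2)) = 2 * \<gamma>"
    proof -
      have "(\<Prod>i\<in>insert 1 (insert (n-1) J2). x i) = x 1 * (x (n - 1) * t ^ (k - 2))"
        using nj2 n1(3) J2 PS[OF J2(1)] by simp
      moreover have "(\<Prod>i\<in>insert 1 (insert (n-1) J2). x (n - i)) = x (n - 1) * (x 1 * t ^ (k - 2))"
        using nj2 n1(3) J2 QS[OF J2(1)] nn by simp
      ultimately show ?thesis using eq[OF i2 c2] by linarith
    qed
    moreover have "t ^ k = t * t * t ^ (k - 2)"
    proof -
      have "k = Suc (Suc (k - 2))" using k2 by simp
      then show ?thesis by (metis power_Suc mult.assoc)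
    qed
    ultimately have g2: "(x 1 * x (n - 1)) * t ^ (k - 2) = (t * t) * t ^ (k - 2)"
      using g0 by (simp add: algebra_simps)
    have tk2: "t ^ (k - 2) > 0" using tpos by simp
    have s2: "x 1 * x (n - 1) = t * t" using g2 tk2 mult_right_cancel[of "t ^ (k - 2)"] by (metis less_irrefl)
    have "(x 1 - x (n - 1)) * (x 1 - x (n - 1)) = 0"
    proof -
      have "(x 1 - x (n - 1)) * (x 1 - x (n - 1)) = (x 1 + x (n - 1)) * (x 1 + x (n - 1)) - 4 * (x 1 * x (n - 1))"
        by (simp add: algebra_simps)
      also have "\<dots> = 0" using s1 s2 by simp
      finally show ?thesis .
    qed
    then show ?thesis by simp
  qed
  show ?thesis
  proof
    fix i assume i: "i \<in> {1..n-1}"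
    have "x 1 \<le> x i" using mono[of 1 i] i by auto
    moreover have "x i \<le> x (n-1)" using mono[of i "n-1"] i by auto
    ultimately show "x i = x 1" using key by simp
  qed
qed

end
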